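(* Let $G$ be a graph whose minimum degree is $3$. Then $\mu(G)\leq 3$.
   Context: Multi-graphs have no self-loops; the skeleton of a multi-graph is its underlying simple graph. Each edge $e$ between $u$ and $v$ consists of two half-edges $e_u$ and $e_v$. A half-edge colouring is a function $c$ from the set of half-edges to $\mathbb{N}_0$; each edge $e$ also gets a weight $w(e)\in\mathbb{C}$. The weight of a perfect matching $P$ is $\prod_{e\in P}w(e)$. A vertex colouring is a map $vc:V\to\mathbb{N}_0$; it filters out the subgraph consisting of all edges $e$ (between $u,v$) with $c(e_u)=vc(u)$ and $c(e_v)=vc(v)$ (with the same weights). The weight of $vc$ is the sum of the weights of all perfect matchings of this filtered subgraph; $vc$ is feasible if the filtered subgraph has at least one perfect matching (an infeasible colouring has weight $0$). An edge-coloured edge-weighted multi-graph is GHZ if every feasible monochromatic vertex colouring has weight $1$ and every non-monochromatic vertex colouring has weight $0$; its dimension is the number of feasible monochromatic vertex colourings. For a simple graph $G$, the matching index $\mu(G)$ is the maximum (possibly $\infty$) of the dimension over all GHZ edge-coloured edge-weighted multi-graphs whose skeleton is $G$. *)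

theory Defs
  imports Complex_Main "HOL-Library.Extended_Nat"
begin

definition simple_graph :: "'a set \<Rightarrow> 'a set set \<Rightarrow> bool" where
  "simple_graph V E \<longleftrightarrow> finite V \<and> (\<forall>x\<in>E. x \<subseteq> V \<and> card x = 2)"

definition degree :: "'a set set \<Rightarrow> 'a \<Rightarrow> nat" where
  "degree E v = card {x\<in>E. v \<in> x}"

definition min_degree :: "'a set \<Rightarrow> 'a set set \<Rightarrow> nat" where
  "min_degree V E = Min (degree E ` V)"

text \<open>Half-edge e_u is represented by the pair (e,u) with u in ends e.\<close>
definition multigraph_with_skeleton ::
  "'a set \<Rightarrow> 'a set set \<Rightarrow> 'e set \<Rightarrow> ('e \<Rightarrow> 'a set) \<Rightarrow> bool" where
  "multigraph_with_skeleton V E Ed ends \<longleftrightarrow>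
     finite Ed \<and> (\<forall>e\<in>Ed. ends e \<in> E) \<and> (\<forall>x\<in>E. \<exists>e\<in>Ed. ends e = x)"

text \<open>Subgraph filtered by vertex colouring vc, given half-edge colouring c (c e u = colour of e_u).\<close>
definition filtered :: "'e set \<Rightarrow> ('e \<Rightarrow> 'a set) \<Rightarrow> ('e \<Rightarrow> 'a \<Rightarrow> nat) \<Rightarrow> ('a \<Rightarrow> nat) \<Rightarrow> 'e set" where
  "filtered Ed ends c vc = {e\<in>Ed. \<forall>u\<in>ends e. c e u = vc u}"

definition perfect_matching :: "'a set \<Rightarrow> ('e \<Rightarrow> 'a set) \<Rightarrow> 'e set \<Rightarrow> 'e set \<Rightarrow> bool" where
  "perfect_matching V ends F P \<longleftrightarrow> P \<subseteq> F \<and> (\<forall>v\<in>V. \<exists>!e. e \<in> P \<and> v \<in> ends e)"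

definition vc_weight ::
  "'a set \<Rightarrow> 'e set \<Rightarrow> ('e \<Rightarrow> 'a set) \<Rightarrow> ('e \<Rightarrow> 'a \<Rightarrow> nat) \<Rightarrow> ('e \<Rightarrow> complex) \<Rightarrow> ('a \<Rightarrow> nat) \<Rightarrow> complex" where
  "vc_weight V Ed ends c w vc =
     (\<Sum>P\<in>{P. perfect_matching V ends (filtered Ed ends c vc) P}. \<Prod>e\<in>P. w e)"

definition feasible ::
  "'a set \<Rightarrow> 'e set \<Rightarrow> ('e \<Rightarrow> 'a set) \<Rightarrow> ('e \<Rightarrow> 'a \<Rightarrow> nat) \<Rightarrow> ('a \<Rightarrow> nat) \<Rightarrow> bool" where
  "feasible V Ed ends c vc \<longleftrightarrow> (\<exists>P. perfect_matching V ends (filtered Ed ends c vc) P)"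

definition monochromatic :: "'a set \<Rightarrow> ('a \<Rightarrow> nat) \<Rightarrow> bool" where
  "monochromatic V vc \<longleftrightarrow> (\<exists>k. \<forall>v\<in>V. vc v = k)"

definition is_GHZ ::
  "'a set \<Rightarrow> 'e set \<Rightarrow> ('e \<Rightarrow> 'a set) \<Rightarrow> ('e \<Rightarrow> 'a \<Rightarrow> nat) \<Rightarrow> ('e \<Rightarrow> complex) \<Rightarrow> bool" where
  "is_GHZ V Ed ends c w \<longleftrightarrow>
     (\<forall>vc. monochromatic V vc \<and> feasible V Ed ends c vc \<longrightarrow> vc_weight V Ed ends c w vc = 1) \<and>
     (\<forall>vc. \<not> monochromatic V vc \<longrightarrow> vc_weight V Ed ends c w vc = 0)"

text \<open>Dimension: number of feasible monochromatic vertex colourings (determined by the colour k).\<close>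
definition ghz_dim ::
  "'a set \<Rightarrow> 'e set \<Rightarrow> ('e \<Rightarrow> 'a set) \<Rightarrow> ('e \<Rightarrow> 'a \<Rightarrow> nat) \<Rightarrow> nat" where
  "ghz_dim V Ed ends c = card {k::nat. feasible V Ed ends c (\<lambda>_. k)}"

text \<open>Matching index (edge names taken from nat, which suffices for finite multi-graphs).\<close>
definition matching_index :: "'a set \<Rightarrow> 'a set set \<Rightarrow> enat" where
  "matching_index V E = Sup {enat (ghz_dim V Ed ends c) | (Ed :: nat set) ends c w.
      multigraph_with_skeleton V E Ed ends \<and> is_GHZ V Ed ends c w}"

end

theory Submission
  imports Defs "HOL-Library.FuncSet"
begin

lemma rank2_3x3:
  fixes f g f' g' :: "nat \<Rightarrow> complex"
  assumes "p\<noteq>q" "q\<noteq>r" "p\<noteq>r"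
   and h: "\<And>j k. j \<in> {p,q,r} \<Longrightarrow> k \<in> {p,q,r} \<Longrightarrow> (if j = k then 1 else 0) = f j * g k + f' j * g' k"
  shows False
proof -
  have "(f p*g p+f' p*g' p)*((f q*g q+f' q*g' q)*(f r*g r+f' r*g' r) - (f q*g r+f' q*g' r)*(f r*g q+f' r*g' q))
     - (f p*g q+f' p*g' q)*((f q*g p+f' q*g' p)*(f r*g r+f' r*g' r) - (f q*g r+f' q*g' r)*(f r*g p+f' r*g' p))
     + (f p*g r+f' p*g' r)*((f q*g p+f' q*g' p)*(f r*g q+f' r*g' q) - (f q*g q+f' q*g' q)*(f r*g p+f' r*g' p)) = 0"
    by algebra
  then show False
    using assms h[of p p, symmetric] h[of p q, symmetric] h[of p r, symmetric]
      h[of q p, symmetric] h[of q q, symmetric] h[of q r, symmetric]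
      h[of r p, symmetric] h[of r q, symmetric] h[of r r, symmetric]
    by simp
qed

lemma alg:
  fixes A1 B1 A2 B2 A3 B3 :: "nat \<Rightarrow> nat \<Rightarrow> complex"
  assumes fin: "finite S" and card: "card S \<ge> 4"
  and h: "\<And>i j k l. i\<in>S \<Longrightarrow> j\<in>S \<Longrightarrow> k\<in>S \<Longrightarrow> l\<in>S \<Longrightarrow>
     (if i=j \<and> j=k \<and> k=l then 1 else 0) = A1 i j * B1 k l + A2 i k * B2 j l + A3 i l * B3 j k"
  shows False
proof -
  define \<alpha> where "\<alpha> i = (\<Sum>l\<in>S. A3 i l)" for i
  have Sne: "S \<noteq> {}" using card by auto
  obtain j0 where j0: "j0 \<in> S" and j0z: "\<alpha> j0 = 0 \<Longrightarrow> (\<forall>i\<in>S. \<alpha> i = 0)"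
  proof (cases "\<exists>i\<in>S. \<alpha> i \<noteq> 0")
    case True then show ?thesis using that by blast
  next
    case False then show ?thesis using that Sne by blast
  qed
  define wt where "wt i = (if i = j0 \<and> \<alpha> j0 \<noteq> 0 then - (\<Sum>i\<in>S-{j0}. \<alpha> i) / \<alpha> j0 else 1)" for i
  have wsum: "(\<Sum>i\<in>S. wt i * \<alpha> i) = 0"
  proof (cases "\<alpha> j0 = 0")
    case True then show ?thesis using j0z by simp
  next
    case False
    have "(\<Sum>i\<in>S. wt i * \<alpha> i) = wt j0 * \<alpha> j0 + (\<Sum>i\<in>S-{j0}. wt i * \<alpha> i)"
      using fin j0 by (simp add: sum.remove)
    also have "(\<Sum>i\<in>S-{j0}. wt i * \<alpha> i) = (\<Sum>i\<in>S-{j0}. \<alpha> i)"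
      by (rule sum.cong) (auto simp: wt_def)
    finally show ?thesis using False by (simp add: wt_def)
  qed
  have w1: "wt i = 1" if "i \<in> S - {j0}" for i using that by (simp add: wt_def)
  have "3 \<le> card (S - {j0})" using card fin j0 by simp
  then obtain T where T: "T \<subseteq> S - {j0}" "card T = 3" by (meson obtain_subset_with_card_n)
  then obtain p q r where pqr: "T = {p,q,r}" "p \<noteq> q" "q \<noteq> r" "p \<noteq> r" by (auto simp: card_3_iff)
  have key: "(if j = k then 1 else 0) = (\<Sum>i\<in>S. wt i * A1 i j) * (\<Sum>l\<in>S. B1 k l)
        + (\<Sum>i\<in>S. wt i * A2 i k) * (\<Sum>l\<in>S. B2 j l)" if jk: "j \<in> {p,q,r}" "k \<in> {p,q,r}" for j k
  proof -
    have jS: "j \<in> S - {j0}" and kS: "k \<in> S - {j0}" using jk T pqr by auto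
    have "(\<Sum>i\<in>S. \<Sum>l\<in>S. wt i * (if i=j \<and> j=k \<and> k=l then 1 else 0))
        = (\<Sum>i\<in>S. \<Sum>l\<in>S. wt i * (A1 i j * B1 k l + A2 i k * B2 j l + A3 i l * B3 j k))"
      using h jS kS by (intro sum.cong refl) auto
    moreover have "(\<Sum>i\<in>S. \<Sum>l\<in>S. wt i * (if i=j \<and> j=k \<and> k=l then 1 else 0)) = (if j = k then 1 else 0)"
    proof -
      have "(\<Sum>i\<in>S. \<Sum>l\<in>S. wt i * (if i=j \<and> j=k \<and> k=l then 1 else 0))
          = (\<Sum>i\<in>S. if i = j \<and> j = k then wt i else 0)"
        using fin kS by (intro sum.cong refl) (auto simp: sum_distrib_left[symmetric])
      also have "\<dots> = (if j = k then wt j else 0)" using fin jS kS by (simp add: sum.delta')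
      finally show ?thesis using w1[OF jS] by auto
    qed
    moreover have "(\<Sum>i\<in>S. \<Sum>l\<in>S. wt i * (A1 i j * B1 k l + A2 i k * B2 j l + A3 i l * B3 j k))
       = (\<Sum>i\<in>S. wt i * A1 i j) * (\<Sum>l\<in>S. B1 k l)
        + (\<Sum>i\<in>S. wt i * A2 i k) * (\<Sum>l\<in>S. B2 j l) + (\<Sum>i\<in>S. wt i * \<alpha> i) * B3 j k"
      by (simp add: \<alpha>_def sum_distrib_left sum_distrib_right sum.distrib algebra_simps)
    ultimately show ?thesis using wsum by simp
  qed
  show False
    by (rule rank2_3x3[OF pqr(2-4), of "\<lambda>j. (\<Sum>i\<in>S. wt i * A1 i j)" "\<lambda>k. (\<Sum>l\<in>S. B1 k l)"
          "\<lambda>j. (\<Sum>l\<in>S. B2 j l)" "\<lambda>k. (\<Sum>i\<in>S. wt i * A2 i k)"])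
       (simp add: key mult.commute)
qed

locale mg =
  fixes V :: "'a set" and Ed :: "'e set" and ends :: "'e \<Rightarrow> 'a set"
    and c :: "'e \<Rightarrow> 'a \<Rightarrow> nat" and w :: "'e \<Rightarrow> complex"
  assumes finV: "finite V" and finEd: "finite Ed" and endsV: "\<And>e. e \<in> Ed \<Longrightarrow> ends e \<subseteq> V"
begin

definition Edin where "Edin U = {e\<in>Ed. ends e \<subseteq> U}"
definition PMs where "PMs U = {P. perfect_matching U ends (Edin U) P}"
definition col where "col P u = c (SOME e. e \<in> P \<and> u \<in> ends e) u"
definition good where "good U S P \<longleftrightarrow> (\<forall>u\<in>U. col P u \<in> S)"

lemma PMsI:
  assumes "P \<subseteq> Ed" "\<And>e. e\<in>P \<Longrightarrow> ends e \<subseteq> U" "\<And>u. u\<in>U \<Longrightarrow> \<exists>e\<in>P. u \<in> ends e"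
    "\<And>u e1 e2. u\<in>U \<Longrightarrow> e1\<in>P \<Longrightarrow> e2\<in>P \<Longrightarrow> u\<in>ends e1 \<Longrightarrow> u\<in>ends e2 \<Longrightarrow> e1=e2"
  shows "P \<in> PMs U"
proof -
  have "P \<subseteq> Edin U" using assms(1,2) by (auto simp: Edin_def)
  moreover have "\<forall>u\<in>U. \<exists>!e. e \<in> P \<and> u \<in> ends e"
  proof
    fix u assume u: "u \<in> U"
    then obtain e where "e\<in>P" "u \<in> ends e" using assms(3) by blast
    then show "\<exists>!e. e \<in> P \<and> u \<in> ends e" using assms(4)[OF u] by blast
  qed
  ultimately show ?thesis by (simp add: PMs_def perfect_matching_def)
qed

lemma PMs_sub: "P \<in> PMs U \<Longrightarrow> P \<subseteq> Ed" by (auto simp: PMs_def perfect_matching_def Edin_def)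
lemma PMs_ends: "P \<in> PMs U \<Longrightarrow> e \<in> P \<Longrightarrow> ends e \<subseteq> U"
  by (auto simp: PMs_def perfect_matching_def Edin_def)
lemma PMs_ex: "P \<in> PMs U \<Longrightarrow> u \<in> U \<Longrightarrow> \<exists>e\<in>P. u \<in> ends e"
  by (auto simp: PMs_def perfect_matching_def)
lemma PMs_un: "P \<in> PMs U \<Longrightarrow> u \<in> U \<Longrightarrow> e1\<in>P \<Longrightarrow> e2\<in>P \<Longrightarrow> u\<in>ends e1 \<Longrightarrow> u\<in>ends e2 \<Longrightarrow> e1=e2"
  unfolding PMs_def perfect_matching_def by blast
lemma PMs_finite: "finite (PMs U)"
  by (rule finite_subset[of _ "Pow Ed"]) (auto dest: PMs_sub simp: finEd)
lemma PMs_fin: "P \<in> PMs U \<Longrightarrow> finite P"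
  using PMs_sub finEd finite_subset by blast

lemma col_eq: assumes "P \<in> PMs U" "u \<in> U" "e \<in> P" "u \<in> ends e" shows "col P u = c e u"
proof -
  let ?e = "SOME e. e \<in> P \<and> u \<in> ends e"
  have "?e \<in> P \<and> u \<in> ends ?e" by (rule someI) (use assms in blast)
  then have "?e = e" using PMs_un[OF assms(1,2)] assms(3,4) by blast
  thus ?thesis by (simp add: col_def)
qed

lemma ins_PM:
  assumes e: "e \<in> Ed" "ends e = {v,x}" and P: "P \<in> PMs (V-{v,x})"
  shows "insert e P \<in> PMs V"
proof (rule PMsI)
  show "insert e P \<subseteq> Ed" using e PMs_sub[OF P] by auto
  show "ends f \<subseteq> V" if "f \<in> insert e P" for f using that endsV e PMs_ends[OF P] by blast
  show "\<exists>f\<in>insert e P. u \<in> ends f" if "u \<in> V" for u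
    using PMs_ex[OF P, of u] that e by auto
  show "e1 = e2" if "u\<in>V" "e1\<in>insert e P" "e2\<in>insert e P" "u\<in>ends e1" "u\<in>ends e2" for u e1 e2
  proof (cases "u \<in> {v,x}")
    case True
    then show ?thesis using that PMs_ends[OF P] e by blast
  next
    case False
    then show ?thesis using that PMs_un[OF P, of u] e by auto
  qed
qed

lemma ins_col:
  assumes e: "e \<in> Ed" "ends e = {v,x}" and P: "P \<in> PMs (V-{v,x})" and u: "u \<in> V"
  shows "col (insert e P) u = (if u \<in> {v,x} then c e u else col P u)"
proof (cases "u \<in> {v,x}")
  case True
  then show ?thesis using col_eq[OF ins_PM[OF e P] u, of e] e by auto
next
  case False
  then obtain f where f: "f \<in> P" "u \<in> ends f" using PMs_ex[OF P, of u] u by auto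
  then show ?thesis using col_eq[OF ins_PM[OF e P] u, of f] col_eq[OF P _ f] u False by auto
qed

lemma del_PM:
  assumes Q: "Q \<in> PMs V" and e: "e \<in> Q" "ends e = {v,x}" and v: "v \<in> V" and x: "x \<in> V"
  shows "Q - {e} \<in> PMs (V-{v,x})"
proof (rule PMsI)
  show "Q - {e} \<subseteq> Ed" using PMs_sub[OF Q] by auto
  show "ends f \<subseteq> V - {v,x}" if "f \<in> Q - {e}" for f
  proof -
    have "v \<notin> ends f" using PMs_un[OF Q v, of e f] that e by auto
    moreover have "x \<notin> ends f" using PMs_un[OF Q x, of e f] that e by auto
    ultimately show ?thesis using PMs_ends[OF Q, of f] that by auto
  qed
  show "\<exists>f\<in>Q - {e}. u \<in> ends f" if "u \<in> V - {v,x}" for u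
    using PMs_ex[OF Q, of u] that e by auto
  show "e1 = e2" if "u\<in>V-{v,x}" "e1\<in>Q-{e}" "e2\<in>Q-{e}" "u\<in>ends e1" "u\<in>ends e2" for u e1 e2
    using that PMs_un[OF Q, of u e1 e2] by auto
qed

lemma del_col:
  assumes Q: "Q \<in> PMs V" and e: "e \<in> Q" "ends e = {v,x}" and v: "v \<in> V" and x: "x \<in> V"
    and u: "u \<in> V - {v,x}"
  shows "col (Q - {e}) u = col Q u"
proof -
  obtain f where f: "f \<in> Q" "u \<in> ends f" using PMs_ex[OF Q, of u] u by auto
  then have "f \<noteq> e" using e u by auto
  then show ?thesis using col_eq[OF del_PM[OF Q e v x] u, of f] col_eq[OF Q _ f] f u by auto
qed

lemma factor:
  assumes v: "v \<in> V" and x: "x \<in> V" and vx: "v \<noteq> x" and y: "y \<in> V - {v,x}" and z: "z \<in> V - {v,x}"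
    and iS: "i \<in> S" and jS: "jx \<in> S"
  shows "(\<Sum>P\<in>{P\<in>PMs V. good V S P \<and> (\<exists>e\<in>P. ends e = {v,x}) \<and> col P v = i \<and> col P x = jx
              \<and> col P y = jy \<and> col P z = jz}. \<Prod>e\<in>P. w e)
    = (\<Sum>e\<in>{e\<in>Ed. ends e = {v,x} \<and> c e v = i \<and> c e x = jx}. w e) *
      (\<Sum>P\<in>{P\<in>PMs (V-{v,x}). good (V-{v,x}) S P \<and> col P y = jy \<and> col P z = jz}. \<Prod>e\<in>P. w e)"
    (is "sum _ ?L = sum _ ?A * sum _ ?B")
proof -
  define ev where "ev Q = (SOME e. e \<in> Q \<and> ends e = {v,x})" for Q
  have "sum w ?A * sum (prod w) ?B = (\<Sum>(e,P)\<in>?A \<times> ?B. w e * prod w P)"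
    by (simp add: sum_product sum.cartesian_product)
  also have "\<dots> = sum (prod w) ?L"
  proof (rule sum.reindex_bij_witness[where j = "\<lambda>(e,P). insert e P" and i = "\<lambda>Q. (ev Q, Q - {ev Q})"])
    fix a assume "a \<in> ?A \<times> ?B"
    then obtain e P where a: "a = (e,P)" "e \<in> ?A" "P \<in> ?B" by auto
    have P: "P \<in> PMs (V-{v,x})" and e: "e \<in> Ed" "ends e = {v,x}" using a by auto
    have eP: "e \<notin> P" using PMs_ends[OF P, of e] e by auto
    have evi: "ev (insert e P) = e"
      unfolding ev_def
    proof (rule some_equality)
      show "e \<in> insert e P \<and> ends e = {v,x}" using e by auto
      fix f assume "f \<in> insert e P \<and> ends f = {v, x}"
      then show "f = e" using PMs_ends[OF P, of f] by auto
    qed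
    show "(\<lambda>Q. (ev Q, Q-{ev Q})) ((\<lambda>(e,P). insert e P) a) = a" using a evi eP by auto
    have gP: "good (V-{v,x}) S P" "col P y = jy" "col P z = jz" using a by auto
    have cols: "c e v = i" "c e x = jx" using a by auto
    have "good V S (insert e P)" unfolding good_def
    proof
      fix u assume u: "u \<in> V"
      show "col (insert e P) u \<in> S"
        using ins_col[OF e P u] gP(1) u cols iS jS by (auto simp: good_def)
    qed
    moreover have "col (insert e P) v = i" "col (insert e P) x = jx" "col (insert e P) y = jy"
        "col (insert e P) z = jz"
      using ins_col[OF e P] v x y z gP cols by auto
    ultimately show "(\<lambda>(e,P). insert e P) a \<in> ?L" using a ins_PM[OF e P] e by auto
    show "prod w ((\<lambda>(e,P). insert e P) a) = (\<lambda>(e,P). w e * prod w P) a"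
      using a eP PMs_fin[OF P] by simp
  next
    fix Q assume Q: "Q \<in> ?L"
    then have QP: "Q \<in> PMs V" and ex: "\<exists>e\<in>Q. ends e = {v,x}" by auto
    have evQ: "ev Q \<in> Q \<and> ends (ev Q) = {v,x}" unfolding ev_def by (rule someI_ex) (use ex in blast)
    show "(\<lambda>(e,P). insert e P) ((\<lambda>Q. (ev Q, Q-{ev Q})) Q) = Q" using evQ by auto
    have d: "Q - {ev Q} \<in> PMs (V-{v,x})" using del_PM[OF QP _ _ v x] evQ by auto
    have dc: "col (Q - {ev Q}) u = col Q u" if "u \<in> V-{v,x}" for u
      using del_col[OF QP _ _ v x that] evQ by auto
    have "c (ev Q) v = i" "c (ev Q) x = jx"
      using col_eq[OF QP v, of "ev Q"] col_eq[OF QP x, of "ev Q"] evQ Q by auto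
    moreover have "good (V-{v,x}) S (Q - {ev Q})" using Q dc by (auto simp: good_def)
    moreover have "ev Q \<in> Ed" using evQ PMs_sub[OF QP] by auto
    ultimately show "(\<lambda>Q. (ev Q, Q-{ev Q})) Q \<in> ?A \<times> ?B" using evQ d dc[OF y] dc[OF z] Q by auto
  qed
  finally show ?thesis by simp
qed

lemma ghz_sum:
  assumes ghz: "is_GHZ V Ed ends c w" and Sf: "finite S"
    and SF: "\<And>k. k \<in> S \<Longrightarrow> feasible V Ed ends c (\<lambda>_. k)"
    and vs: "v \<in> V" "a \<in> V" "b \<in> V" "d \<in> V" and ijkl: "i\<in>S" "j\<in>S" "k\<in>S" "l\<in>S"
  shows "(\<Sum>P\<in>{P\<in>PMs V. good V S P \<and> col P v = i \<and> col P a = j \<and> col P b = k \<and> col P d = l}. prod w P)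
     = (if i=j \<and> j=k \<and> k=l then 1 else 0)"
    (is "sum _ ?X = _")
proof -
  define g where "g P = restrict (col P) V" for P
  define VC where "VC = {vc \<in> V \<rightarrow>\<^sub>E S. vc v = i \<and> vc a = j \<and> vc b = k \<and> vc d = l}"
  have finVC: "finite VC" unfolding VC_def
    by (rule finite_subset[OF _ finite_PiE[OF finV, of "\<lambda>_. S"]]) (use Sf in auto)
  have gX: "g ` ?X \<subseteq> VC" unfolding VC_def g_def good_def using vs by auto
  have finX: "finite ?X" by (rule finite_subset[OF _ PMs_finite[of V]]) auto
  have fil: "filtered Ed ends c vc = filtered Ed ends c vc'" if "\<forall>u\<in>V. vc u = vc' u" for vc vc'
    unfolding filtered_def using endsV that by fastforce
  have seteq: "{P\<in>?X. g P = vc} = {P. perfect_matching V ends (filtered Ed ends c vc) P}"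
    if vc: "vc \<in> VC" for vc
  proof (intro set_eqI iffI)
    fix P assume "P \<in> {P\<in>?X. g P = vc}"
    then have P: "P \<in> PMs V" and gv: "g P = vc" by auto
    have "P \<subseteq> filtered Ed ends c vc"
    proof
      fix e assume e: "e \<in> P"
      have "\<forall>u\<in>ends e. c e u = vc u"
      proof
        fix u assume u: "u \<in> ends e"
        have uV: "u\<in>V" using PMs_ends[OF P e] u by auto
        have "vc u = col P u" using gv uV by (auto simp: g_def)
        then show "c e u = vc u" using col_eq[OF P uV e u] by simp
      qed
      then show "e \<in> filtered Ed ends c vc" using PMs_sub[OF P] e by (auto simp: filtered_def)
    qed
    then show "P \<in> {P. perfect_matching V ends (filtered Ed ends c vc) P}"
      using P by (auto simp: PMs_def perfect_matching_def)
  next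
    fix P assume "P \<in> {P. perfect_matching V ends (filtered Ed ends c vc) P}"
    then have pm: "P \<subseteq> filtered Ed ends c vc" "\<forall>u\<in>V. \<exists>!e. e\<in>P \<and> u\<in>ends e"
      by (auto simp: perfect_matching_def)
    have "P \<subseteq> Edin V" using pm(1) endsV by (auto simp: Edin_def filtered_def)
    then have P: "P \<in> PMs V" using pm(2) by (auto simp: PMs_def perfect_matching_def)
    have cv: "col P u = vc u" if u: "u \<in> V" for u
    proof -
      obtain e where e: "e\<in>P" "u\<in>ends e" using pm(2) u by blast
      then show ?thesis using col_eq[OF P u e] pm(1) by (auto simp: filtered_def)
    qed
    have "g P = vc"
    proof
      fix u show "g P u = vc u" using cv vc
        by (cases "u \<in> V") (auto simp: g_def VC_def PiE_def extensional_def)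
    qed
    moreover have "good V S P" using cv vc by (auto simp: good_def VC_def PiE_def Pi_def)
    ultimately show "P \<in> {P\<in>?X. g P = vc}" using P cv vc vs by (auto simp: VC_def)
  qed
  have "sum (prod w) ?X = (\<Sum>vc\<in>VC. sum (prod w) {P\<in>?X. g P = vc})"
    by (rule sum.group[symmetric]) (use finX finVC gX in auto)
  also have "\<dots> = (\<Sum>vc\<in>VC. vc_weight V Ed ends c w vc)"
    unfolding vc_weight_def by (rule sum.cong[OF refl], subst seteq[symmetric]) auto
  also have "\<dots> = (\<Sum>vc\<in>VC. if vc = restrict (\<lambda>_. i) V \<and> i=j \<and> j=k \<and> k=l then 1 else 0)"
  proof (rule sum.cong[OF refl])
    fix vc assume vc: "vc \<in> VC"
    show "vc_weight V Ed ends c w vc = (if vc = restrict (\<lambda>_. i) V \<and> i=j \<and> j=k \<and> k=l then 1 else 0)"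
    proof (cases "monochromatic V vc")
      case True
      then obtain m where m: "\<forall>u\<in>V. vc u = m" by (auto simp: monochromatic_def)
      have eqs: "m = i" "m = j" "m = k" "m = l" using m vc vs by (auto simp: VC_def)
      have r: "vc = restrict (\<lambda>_. i) V"
      proof
        fix u show "vc u = restrict (\<lambda>_. i) V u" using m eqs vc
          by (cases "u \<in> V") (auto simp: VC_def PiE_def extensional_def)
      qed
      have "feasible V Ed ends c vc" using SF[of i] ijkl fil[of vc "\<lambda>_. i"] m eqs
        by (simp add: feasible_def)
      then have "vc_weight V Ed ends c w vc = 1" using ghz True by (simp add: is_GHZ_def)
      then show ?thesis using r eqs by simp
    next
      case False
      then have "vc_weight V Ed ends c w vc = 0" using ghz by (simp add: is_GHZ_def)
      moreover have "vc \<noteq> restrict (\<lambda>_. i) V" using False by (auto simp: monochromatic_def)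
      ultimately show ?thesis by simp
    qed
  qed
  also have "\<dots> = (if i=j \<and> j=k \<and> k=l then 1 else 0)"
  proof (cases "i=j \<and> j=k \<and> k=l")
    case True
    have "restrict (\<lambda>_. i) V \<in> VC" using True ijkl vs by (auto simp: VC_def)
    then show ?thesis using True finVC by (simp add: sum.delta')
  next
    case False
    have "(\<Sum>vc\<in>VC. if vc = restrict (\<lambda>_. i) V \<and> i=j \<and> j=k \<and> k=l then 1 else (0::complex)) = 0"
      by (rule sum.neutral) (use False in auto)
    then show ?thesis using False by presburger
  qed
  finally show ?thesis .
qed

end

theorem theorem6:
  fixes V :: "'a set" and E :: "'a set set"
  assumes "simple_graph V E"
    and "V \<noteq> {}"
    and "min_degree V E = 3"
  shows "matching_index V E \<le> 3"
proof -
  have finV: "finite V" and Esub: "\<And>x. x\<in>E \<Longrightarrow> x \<subseteq> V \<and> card x = 2"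
    using assms(1) by (auto simp: simple_graph_def)
  have "Min (degree E ` V) \<in> degree E ` V" using finV assms(2) by (intro Min_in) auto
  then obtain v where v: "v \<in> V" "card {x\<in>E. v \<in> x} = 3"
    using assms(3) by (auto simp: min_degree_def degree_def)
  then obtain X1 X2 X3 where X: "{x\<in>E. v\<in>x} = {X1,X2,X3}" "X1\<noteq>X2" "X2\<noteq>X3" "X1\<noteq>X3"
    by (auto simp: card_3_iff)
  have nbr: "\<exists>u. u \<noteq> v \<and> u \<in> V \<and> X = {v,u}" if "X \<in> {X1,X2,X3}" for X
  proof -
    have XE: "X \<in> E" and vX: "v \<in> X" using that X(1) by blast+
    then obtain p q where pq: "X = {p,q}" "p\<noteq>q" using Esub[of X] by (auto simp: card_2_iff)
    show ?thesis
    proof (cases "v = p")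
      case True then show ?thesis using pq Esub[OF XE] by auto
    next
      case False then have "v = q" using vX pq by auto
      then show ?thesis using pq Esub[OF XE] by auto
    qed
  qed
  obtain a where a: "a\<noteq>v" "a\<in>V" "X1 = {v,a}" using nbr[of X1] by blast
  obtain b where b: "b\<noteq>v" "b\<in>V" "X2 = {v,b}" using nbr[of X2] by blast
  obtain d where d: "d\<noteq>v" "d\<in>V" "X3 = {v,d}" using nbr[of X3] by blast
  have ab: "a \<noteq> b" "b \<noteq> d" "a \<noteq> d" using X a b d by auto
  have nb: "X = {v,a} \<or> X = {v,b} \<or> X = {v,d}" if "X \<in> E" "v \<in> X" for X
    using that X(1) a b d by blast
  have dim: "ghz_dim V Ed ends c \<le> 3"
    if mgs: "multigraph_with_skeleton V E Ed ends" and ghz: "is_GHZ V Ed ends c w"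
    for Ed :: "nat set" and ends c w
  proof (rule ccontr)
    let ?F = "{k. feasible V Ed ends c (\<lambda>_. k)}"
    assume "\<not> ghz_dim V Ed ends c \<le> 3"
    then have cF: "4 \<le> card ?F" by (simp add: ghz_dim_def)
    obtain S where S: "S \<subseteq> ?F" "card S = 4" "finite S"
      using obtain_subset_with_card_n[OF cF] by blast
    have eE: "\<And>e. e\<in>Ed \<Longrightarrow> ends e \<in> E" and finEd: "finite Ed"
      using mgs by (auto simp: multigraph_with_skeleton_def)
    interpret mg V Ed ends c w
      by unfold_locales (use finV finEd eE Esub in auto)
    define A1 where "A1 i j = (\<Sum>e\<in>{e\<in>Ed. ends e = {v,a} \<and> c e v = i \<and> c e a = j}. w e)" for i j
    define B1 where "B1 k l = (\<Sum>P\<in>{P\<in>PMs (V-{v,a}). good (V-{v,a}) S P \<and> col P b = k \<and> col P d = l}. prod w P)" for k l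
    define A2 where "A2 i k = (\<Sum>e\<in>{e\<in>Ed. ends e = {v,b} \<and> c e v = i \<and> c e b = k}. w e)" for i k
    define B2 where "B2 j l = (\<Sum>P\<in>{P\<in>PMs (V-{v,b}). good (V-{v,b}) S P \<and> col P a = j \<and> col P d = l}. prod w P)" for j l
    define A3 where "A3 i l = (\<Sum>e\<in>{e\<in>Ed. ends e = {v,d} \<and> c e v = i \<and> c e d = l}. w e)" for i l
    define B3 where "B3 j k = (\<Sum>P\<in>{P\<in>PMs (V-{v,d}). good (V-{v,d}) S P \<and> col P a = j \<and> col P b = k}. prod w P)" for j k
    show False
    proof (rule alg[of S A1 B1 A2 B2 A3 B3])
      show "finite S" "4 \<le> card S" using S by auto
      fix i j k l assume ijkl: "i\<in>S" "j\<in>S" "k\<in>S" "l\<in>S"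
      let ?X = "{P\<in>PMs V. good V S P \<and> col P v = i \<and> col P a = j \<and> col P b = k \<and> col P d = l}"
      let ?Xa = "{P\<in>?X. \<exists>e\<in>P. ends e = {v,a}}"
      let ?Xb = "{P\<in>?X. \<exists>e\<in>P. ends e = {v,b}}"
      let ?Xd = "{P\<in>?X. \<exists>e\<in>P. ends e = {v,d}}"
      have union: "?X = ?Xa \<union> ?Xb \<union> ?Xd"
      proof (intro equalityI subsetI)
        fix P assume P: "P \<in> ?X"
        then have PP: "P \<in> PMs V" by auto
        obtain e where e: "e \<in> P" "v \<in> ends e" using PMs_ex[OF PP v(1)] by auto
        have "ends e \<in> E" using eE PMs_sub[OF PP] e by auto
        then show "P \<in> ?Xa \<union> ?Xb \<union> ?Xd" using nb[of "ends e"] e P by auto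
      qed auto
      have two: "x = y" if h: "P \<in> ?X" "\<exists>e\<in>P. ends e = {v,x}" "\<exists>e\<in>P. ends e = {v,y}" "x \<noteq> v" "y \<noteq> v" for P x y
      proof -
        have PP: "P \<in> PMs V" using that by auto
        obtain e1 e2 where "e1\<in>P" "ends e1 = {v,x}" "e2\<in>P" "ends e2 = {v,y}" using h(2,3) by blast
        then have "{v,x} = {v,y}" using PMs_un[OF PP v(1), of e1 e2] by auto
        then show ?thesis using h(4,5) by (auto simp: doubleton_eq_iff)
      qed
      have disj: "?Xa \<inter> ?Xb = {}" "(?Xa \<union> ?Xb) \<inter> ?Xd = {}"
        using two[of _ a b] two[of _ a d] two[of _ b d] ab a b d by blast+
      have finX: "finite ?X" by (rule finite_subset[OF _ PMs_finite[of V]]) auto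
      have fa: "finite ?Xa" "finite ?Xb" "finite ?Xd" by (rule finite_subset[OF _ finX], blast)+
      have "sum (prod w) ?X = sum (prod w) (?Xa \<union> ?Xb \<union> ?Xd)" by (rule arg_cong[OF union])
      also have "\<dots> = sum (prod w) (?Xa \<union> ?Xb) + sum (prod w) ?Xd"
        by (rule sum.union_disjoint) (use fa disj in auto)
      also have "sum (prod w) (?Xa \<union> ?Xb) = sum (prod w) ?Xa + sum (prod w) ?Xb"
        by (rule sum.union_disjoint) (use fa disj in auto)
      finally have "sum (prod w) ?X = sum (prod w) ?Xa + sum (prod w) ?Xb + sum (prod w) ?Xd" .
      moreover have "sum (prod w) ?X = (if i=j \<and> j=k \<and> k=l then 1 else 0)"
        by (rule ghz_sum[where v=v and a=a and b=b and d=d]) (use ghz S ijkl v a b d in auto)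
      moreover have "sum (prod w) ?Xa = A1 i j * B1 k l"
      proof -
        have "?Xa = {P\<in>PMs V. good V S P \<and> (\<exists>e\<in>P. ends e = {v,a}) \<and> col P v = i \<and> col P a = j
              \<and> col P b = k \<and> col P d = l}" by auto
        then show ?thesis unfolding A1_def B1_def
          using factor[where v=v and x=a and y=b and z=d and S=S and i=i and jx=j and jy=k and jz=l]
            v a b d ab ijkl by simp
      qed
      moreover have "sum (prod w) ?Xb = A2 i k * B2 j l"
      proof -
        have "?Xb = {P\<in>PMs V. good V S P \<and> (\<exists>e\<in>P. ends e = {v,b}) \<and> col P v = i \<and> col P b = k
              \<and> col P a = j \<and> col P d = l}" by auto
        then show ?thesis unfolding A2_def B2_def
          using factor[where v=v and x=b and y=a and z=d and S=S and i=i and jx=k and jy=j and jz=l]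
            v a b d ab ijkl by simp
      qed
      moreover have "sum (prod w) ?Xd = A3 i l * B3 j k"
      proof -
        have "?Xd = {P\<in>PMs V. good V S P \<and> (\<exists>e\<in>P. ends e = {v,d}) \<and> col P v = i \<and> col P d = l
              \<and> col P a = j \<and> col P b = k}" by auto
        then show ?thesis unfolding A3_def B3_def
          using factor[where v=v and x=d and y=a and z=b and S=S and i=i and jx=l and jy=j and jz=k]
            v a b d ab ijkl by simp
      qed
      ultimately show "(if i=j \<and> j=k \<and> k=l then 1 else 0) = A1 i j * B1 k l + A2 i k * B2 j l + A3 i l * B3 j k"
        by simp
    qed
  qed
  show ?thesis unfolding matching_index_def
  proof (rule Sup_least)
    fix y assume "y \<in> {enat (ghz_dim V Ed ends c) | (Ed :: nat set) ends c w.
      multigraph_with_skeleton V E Ed ends \<and> is_GHZ V Ed ends c w}"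
    then obtain Ed :: "nat set" and ends c w where y: "y = enat (ghz_dim V Ed ends c)"
      "multigraph_with_skeleton V E Ed ends" "is_GHZ V Ed ends c w" by blast
    have "ghz_dim V Ed ends c \<le> 3" using dim[OF y(2,3)] .
    then show "y \<le> 3" using y(1) by (simp add: numeral_eq_enat)
  qed
qed

end
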